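(* Let $(\mathbb{X},\mathbb{0},\mathbb{1},\oplus,\otimes)$ be a selective idempotent semifield with real powers (as described in the context). Let $M,N$ be positive integers, let $x_{1},\ldots,x_{M}$ and $y_{1},\ldots,y_{M}$ be nonzero elements of $\mathbb{X}$, and let $\bm{p}=(p_{1},\ldots,p_{N})^{T}\in\mathbb{R}^{N}$. Define $\bm{y}=(y_{1},\ldots,y_{M})^{T}$, the $M\times N$ matrix $\bm{X}(\bm{p})$ with entries $(\bm{X}(\bm{p}))_{ij}=x_{i}^{p_{j}}$, the scalar $$\Delta(\bm{p})=\bigl(\bm{X}(\bm{p})(\bm{y}^{-}\bm{X}(\bm{p}))^{-}\bigr)^{-}\bm{y},$$ and the functions of a real variable $p$ $$\varphi(p)=\bigoplus_{k=1}^{M}y_{k}^{-1}x_{k}^{p},\qquad \varphi_{i}(p)=y_{i}x_{i}^{-p}\varphi(p),\quad i=1,\ldots,M.$$ Then $$\Delta(\bm{p})=\bigoplus_{i=1}^{M}\min_{1\leq j\leq N}\varphi_{i}(p_{j})=\min_{(I_{1},\ldots,I_{N})}\bigoplus_{j=1}^{N}\bigoplus_{i\in I_{j}}\varphi_{i}(p_{j}),$$ where the last minimum is taken over all ordered partitions $(I_{1},\ldots,I_{N})$ of $\{1,\ldots,M\}$ into $N$ parts (empty parts allowed), and empty sums are interpreted as $\mathbb{0}$.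
   Context: A tropical (idempotent) semifield is a set $\mathbb{X}$ with operations $\oplus,\otimes$, zero $\mathbb{0}$ and identity $\mathbb{1}$ such that $(\mathbb{X},\mathbb{0},\oplus)$ is a commutative idempotent monoid ($x\oplus x=x$), $(\mathbb{X}\setminus\{\mathbb{0}\},\mathbb{1},\otimes)$ is an abelian group, and $\otimes$ distributes over $\oplus$; the product $x\otimes y$ is written $xy$ and $x^{-1}$ denotes the multiplicative inverse of $x\neq\mathbb{0}$. The semifield is assumed selective ($x\oplus y\in\{x,y\}$), so the order $x\leq y\iff x\oplus y=y$ is total; $\oplus$ is the maximum with respect to this order, and $\min$ denotes the corresponding minimum. Powers $x^{r}$ of nonzero $x$ are defined for all real exponents $r$ (iterated products for integers, unique roots for rationals, extended to reals), with $x^{0}=\mathbb{1}$. Matrix and vector operations are defined by the usual formulas with $\oplus,\otimes$ in place of $+,\times$: $(\bm{A}\bm{C})_{ij}=\bigoplus_{k}a_{ik}c_{kj}$. For a nonzero column vector $\bm{x}=(x_{i})$, its conjugate is the row vector $\bm{x}^{-}=(x_{i}^{-})$ with $x_{i}^{-}=x_{i}^{-1}$ if $x_{i}\neq\mathbb{0}$ and $x_{i}^{-}=\mathbb{0}$ otherwise; for a nonzero row vector the conjugate is the column vector defined analogously; for a nonzero scalar the conjugate is its inverse. *)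

theory Defs
  imports Complex_Main
begin

record 'a tsf =
  tzero :: 'a
  tone  :: 'a
  tadd  :: "'a \<Rightarrow> 'a \<Rightarrow> 'a"
  tmul  :: "'a \<Rightarrow> 'a \<Rightarrow> 'a"
  tpow  :: "'a \<Rightarrow> real \<Rightarrow> 'a"

definition trop_semifield :: "'a tsf \<Rightarrow> bool" where
  "trop_semifield S \<longleftrightarrow>
     (\<forall>x y z. tadd S x (tadd S y z) = tadd S (tadd S x y) z) \<and>
     (\<forall>x y. tadd S x y = tadd S y x) \<and>
     (\<forall>x. tadd S x (tzero S) = x) \<and>
     (\<forall>x. tadd S x x = x) \<and>
     (\<forall>x y. tadd S x y = x \<or> tadd S x y = y) \<and>
     (\<forall>x y z. tmul S x (tmul S y z) = tmul S (tmul S x y) z) \<and>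
     (\<forall>x y. tmul S x y = tmul S y x) \<and>
     (\<forall>x. tmul S x (tone S) = x) \<and>
     tone S \<noteq> tzero S \<and>
     (\<forall>x y. x \<noteq> tzero S \<longrightarrow> y \<noteq> tzero S \<longrightarrow> tmul S x y \<noteq> tzero S) \<and>
     (\<forall>x. x \<noteq> tzero S \<longrightarrow> (\<exists>y. tmul S x y = tone S)) \<and>
     (\<forall>x. tmul S x (tzero S) = tzero S) \<and>
     (\<forall>x y z. tmul S x (tadd S y z) = tadd S (tmul S x y) (tmul S x z)) \<and>
     (\<forall>x. x \<noteq> tzero S \<longrightarrow>
        tpow S x 0 = tone S \<and> tpow S x 1 = x \<and>
        (\<forall>r s. tpow S x (r + s) = tmul S (tpow S x r) (tpow S x s)) \<and>
        (\<forall>r s. tpow S (tpow S x r) s = tpow S x (r * s)) \<and>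
        (\<forall>y r. y \<noteq> tzero S \<longrightarrow> tpow S (tmul S x y) r = tmul S (tpow S x r) (tpow S y r)) \<and>
        (\<forall>y r. y \<noteq> tzero S \<longrightarrow> tadd S x y = y \<longrightarrow> r \<ge> 0 \<longrightarrow>
                 tadd S (tpow S x r) (tpow S y r) = tpow S y r))"

definition tinv :: "'a tsf \<Rightarrow> 'a \<Rightarrow> 'a" where
  "tinv S x = (THE y. tmul S x y = tone S)"

definition tle :: "'a tsf \<Rightarrow> 'a \<Rightarrow> 'a \<Rightarrow> bool" where
  "tle S x y \<longleftrightarrow> tadd S x y = y"

definition tmin :: "'a tsf \<Rightarrow> 'a \<Rightarrow> 'a \<Rightarrow> 'a" where
  "tmin S x y = (if tle S x y then x else y)"

definition tsum :: "'a tsf \<Rightarrow> (nat \<Rightarrow> 'a) \<Rightarrow> nat set \<Rightarrow> 'a" where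
  "tsum S f I = foldr (\<lambda>i acc. tadd S (f i) acc) (sorted_list_of_set I) (tzero S)"

text \<open>Minimum of f j over 1 \<le> j \<le> N (N \<ge> 1).\<close>
definition tmin_range :: "'a tsf \<Rightarrow> (nat \<Rightarrow> 'a) \<Rightarrow> nat \<Rightarrow> 'a" where
  "tmin_range S f N = foldr (\<lambda>j acc. tmin S (f j) acc) [2..<N+1] (f 1)"

text \<open>Matrices as 1-based index functions; product with inner dimension K.\<close>
definition tmat_mul :: "'a tsf \<Rightarrow> nat \<Rightarrow> (nat \<Rightarrow> nat \<Rightarrow> 'a) \<Rightarrow> (nat \<Rightarrow> nat \<Rightarrow> 'a) \<Rightarrow> nat \<Rightarrow> nat \<Rightarrow> 'a" where
  "tmat_mul S K A B = (\<lambda>i j. tsum S (\<lambda>k. tmul S (A i k) (B k j)) {1..K})"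

definition tconj :: "'a tsf \<Rightarrow> (nat \<Rightarrow> nat \<Rightarrow> 'a) \<Rightarrow> nat \<Rightarrow> nat \<Rightarrow> 'a" where
  "tconj S A = (\<lambda>i j. if A j i = tzero S then tzero S else tinv S (A j i))"

definition Xmat :: "'a tsf \<Rightarrow> (nat \<Rightarrow> 'a) \<Rightarrow> (nat \<Rightarrow> real) \<Rightarrow> nat \<Rightarrow> nat \<Rightarrow> 'a" where
  "Xmat S x p = (\<lambda>i j. tpow S (x i) (p j))"

definition colvec :: "(nat \<Rightarrow> 'a) \<Rightarrow> nat \<Rightarrow> nat \<Rightarrow> 'a" where
  "colvec y = (\<lambda>i j. y i)"

text \<open>Delta(p) = (X(p) (y^- X(p))^-)^- y, a 1x1 matrix; we take its entry.\<close>
definition Delta :: "'a tsf \<Rightarrow> nat \<Rightarrow> nat \<Rightarrow> (nat \<Rightarrow> 'a) \<Rightarrow> (nat \<Rightarrow> 'a) \<Rightarrow> (nat \<Rightarrow> real) \<Rightarrow> 'a" where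
  "Delta S M N x y p =
     tmat_mul S M
       (tconj S (tmat_mul S N (Xmat S x p) (tconj S (tmat_mul S M (tconj S (colvec y)) (Xmat S x p)))))
       (colvec y) 1 1"

definition phi :: "'a tsf \<Rightarrow> nat \<Rightarrow> (nat \<Rightarrow> 'a) \<Rightarrow> (nat \<Rightarrow> 'a) \<Rightarrow> real \<Rightarrow> 'a" where
  "phi S M x y q = tsum S (\<lambda>k. tmul S (tinv S (y k)) (tpow S (x k) q)) {1..M}"

definition phi_i :: "'a tsf \<Rightarrow> nat \<Rightarrow> (nat \<Rightarrow> 'a) \<Rightarrow> (nat \<Rightarrow> 'a) \<Rightarrow> nat \<Rightarrow> real \<Rightarrow> 'a" where
  "phi_i S M x y i q = tmul S (tmul S (y i) (tpow S (x i) (- q))) (phi S M x y q)"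

definition is_ordered_partition :: "nat \<Rightarrow> nat \<Rightarrow> (nat \<Rightarrow> nat set) \<Rightarrow> bool" where
  "is_ordered_partition M N P \<longleftrightarrow>
     (\<forall>j\<in>{1..N}. P j \<subseteq> {1..M}) \<and>
     (\<forall>j\<in>{1..N}. \<forall>k\<in>{1..N}. j \<noteq> k \<longrightarrow> P j \<inter> P k = {}) \<and>
     (\<Union>j\<in>{1..N}. P j) = {1..M}"

definition part_val :: "'a tsf \<Rightarrow> nat \<Rightarrow> nat \<Rightarrow> (nat \<Rightarrow> 'a) \<Rightarrow> (nat \<Rightarrow> 'a) \<Rightarrow> (nat \<Rightarrow> real) \<Rightarrow> (nat \<Rightarrow> nat set) \<Rightarrow> 'a" where
  "part_val S M N x y p P = tsum S (\<lambda>j. tsum S (\<lambda>i. phi_i S M x y i (p j)) (P j)) {1..N}"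

definition is_tmin_of :: "'a tsf \<Rightarrow> 'a \<Rightarrow> 'a set \<Rightarrow> bool" where
  "is_tmin_of S m A \<longleftrightarrow> m \<in> A \<and> (\<forall>a\<in>A. tle S m a)"

end

theory Submission
  imports Defs
begin

locale tsl =
  fixes S :: "'a tsf"
  assumes ax: "trop_semifield S"
begin

lemmas axs = ax[unfolded trop_semifield_def]

lemma add_assoc: "tadd S x (tadd S y z) = tadd S (tadd S x y) z"
  using axs[THEN conjunct1] by blast
lemma add_comm: "tadd S x y = tadd S y x"
  using axs[THEN conjunct2, THEN conjunct1] by blast
lemma add_zero: "tadd S x (tzero S) = x"
  using axs[THEN conjunct2, THEN conjunct2, THEN conjunct1] by blast
lemma add_idem: "tadd S x x = x"
  using axs[THEN conjunct2, THEN conjunct2, THEN conjunct2, THEN conjunct1] by blast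
lemma add_sel: "tadd S x y = x \<or> tadd S x y = y"
  using axs[THEN conjunct2, THEN conjunct2, THEN conjunct2, THEN conjunct2, THEN conjunct1] by blast
lemma mul_assoc: "tmul S x (tmul S y z) = tmul S (tmul S x y) z"
  using axs[THEN conjunct2, THEN conjunct2, THEN conjunct2, THEN conjunct2, THEN conjunct2, THEN conjunct1] by blast
lemma mul_comm: "tmul S x y = tmul S y x"
  using axs[THEN conjunct2, THEN conjunct2, THEN conjunct2, THEN conjunct2, THEN conjunct2, THEN conjunct2, THEN conjunct1] by blast
lemma mul_one: "tmul S x (tone S) = x"
  using axs[THEN conjunct2, THEN conjunct2, THEN conjunct2, THEN conjunct2, THEN conjunct2, THEN conjunct2, THEN conjunct2, THEN conjunct1] by blast
lemma one_nz: "tone S \<noteq> tzero S"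
  using axs[THEN conjunct2, THEN conjunct2, THEN conjunct2, THEN conjunct2, THEN conjunct2, THEN conjunct2, THEN conjunct2, THEN conjunct2, THEN conjunct1] by blast
lemma mul_nz: "x \<noteq> tzero S \<Longrightarrow> y \<noteq> tzero S \<Longrightarrow> tmul S x y \<noteq> tzero S"
  using axs[THEN conjunct2, THEN conjunct2, THEN conjunct2, THEN conjunct2, THEN conjunct2, THEN conjunct2, THEN conjunct2, THEN conjunct2, THEN conjunct2, THEN conjunct1] by blast
lemma inv_ex: "x \<noteq> tzero S \<Longrightarrow> \<exists>y. tmul S x y = tone S"
  using axs[THEN conjunct2, THEN conjunct2, THEN conjunct2, THEN conjunct2, THEN conjunct2, THEN conjunct2, THEN conjunct2, THEN conjunct2, THEN conjunct2, THEN conjunct2, THEN conjunct1] by blast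
lemma mul_zero: "tmul S x (tzero S) = tzero S"
  using axs[THEN conjunct2, THEN conjunct2, THEN conjunct2, THEN conjunct2, THEN conjunct2, THEN conjunct2, THEN conjunct2, THEN conjunct2, THEN conjunct2, THEN conjunct2, THEN conjunct2, THEN conjunct1] by blast
lemma distrib: "tmul S x (tadd S y z) = tadd S (tmul S x y) (tmul S x z)"
  using axs[THEN conjunct2, THEN conjunct2, THEN conjunct2, THEN conjunct2, THEN conjunct2, THEN conjunct2, THEN conjunct2, THEN conjunct2, THEN conjunct2, THEN conjunct2, THEN conjunct2, THEN conjunct2, THEN conjunct1] by blast
lemma pow0: "x \<noteq> tzero S \<Longrightarrow> tpow S x 0 = tone S"
  using axs[THEN conjunct2, THEN conjunct2, THEN conjunct2, THEN conjunct2, THEN conjunct2, THEN conjunct2, THEN conjunct2, THEN conjunct2, THEN conjunct2, THEN conjunct2, THEN conjunct2, THEN conjunct2, THEN conjunct2] by blast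
lemma pow_add: "x \<noteq> tzero S \<Longrightarrow> tpow S x (r + s) = tmul S (tpow S x r) (tpow S x s)"
  using axs[THEN conjunct2, THEN conjunct2, THEN conjunct2, THEN conjunct2, THEN conjunct2, THEN conjunct2, THEN conjunct2, THEN conjunct2, THEN conjunct2, THEN conjunct2, THEN conjunct2, THEN conjunct2, THEN conjunct2] by blast

lemma mul_swap: "tmul S (tmul S a b) (tmul S c d) = tmul S (tmul S a c) (tmul S b d)"
proof -
  have "tmul S (tmul S a b) (tmul S c d) = tmul S a (tmul S (tmul S b c) d)"
    by (simp only: mul_assoc)
  also have "\<dots> = tmul S a (tmul S (tmul S c b) d)" by (simp only: mul_comm[of b c])
  also have "\<dots> = tmul S (tmul S a c) (tmul S b d)" by (simp only: mul_assoc)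
  finally show ?thesis .
qed

lemma le_refl: "tle S x x" by (simp add: tle_def add_idem)
lemma le_antisym: "tle S x y \<Longrightarrow> tle S y x \<Longrightarrow> x = y"
  unfolding tle_def by (metis add_comm)
lemma le_trans: "tle S x y \<Longrightarrow> tle S y z \<Longrightarrow> tle S x z"
  unfolding tle_def by (metis add_assoc)
lemma le_total: "tle S x y \<or> tle S y x"
  unfolding tle_def by (metis add_comm add_sel)
lemma zero_le: "tle S (tzero S) x"
  unfolding tle_def by (metis add_comm add_zero)
lemma add_le_iff: "tle S (tadd S x y) b \<longleftrightarrow> tle S x b \<and> tle S y b"
proof
  assume h: "tle S (tadd S x y) b"
  have "tle S x (tadd S x y)" unfolding tle_def by (metis add_assoc add_idem)
  moreover have "tle S y (tadd S x y)" unfolding tle_def by (metis add_assoc add_comm add_idem)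
  ultimately show "tle S x b \<and> tle S y b" using h le_trans by blast
next
  assume "tle S x b \<and> tle S y b"
  then show "tle S (tadd S x y) b" unfolding tle_def by (metis add_assoc)
qed
lemma mul_mono: "tle S a b \<Longrightarrow> tle S (tmul S c a) (tmul S c b)"
  unfolding tle_def by (metis distrib)

lemma inv_unique: "x \<noteq> tzero S \<Longrightarrow> tmul S x y = tone S \<Longrightarrow> tmul S x z = tone S \<Longrightarrow> y = z"
  by (metis mul_assoc mul_comm mul_one)

lemma mul_inv: "x \<noteq> tzero S \<Longrightarrow> tmul S x (tinv S x) = tone S"
  unfolding tinv_def using inv_ex[of x] inv_unique[of x]
  by (metis (mono_tags, lifting) theI)

lemma tinv_eq: "x \<noteq> tzero S \<Longrightarrow> tmul S x y = tone S \<Longrightarrow> tinv S x = y"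
  using mul_inv inv_unique by blast

lemma tinv_nz: "x \<noteq> tzero S \<Longrightarrow> tinv S x \<noteq> tzero S"
  using mul_inv mul_zero one_nz by metis

lemma pow_nz: "x \<noteq> tzero S \<Longrightarrow> tpow S x r \<noteq> tzero S"
proof
  assume x: "x \<noteq> tzero S" and h: "tpow S x r = tzero S"
  have "tone S = tpow S x (r + - r)" using pow0[OF x] by simp
  also have "\<dots> = tmul S (tpow S x r) (tpow S x (-r))" using pow_add[OF x] by blast
  also have "\<dots> = tzero S" using h by (metis mul_comm mul_zero)
  finally show False using one_nz by simp
qed

lemma inv_pow: "x \<noteq> tzero S \<Longrightarrow> tinv S (tpow S x r) = tpow S x (- r)"
  apply (rule tinv_eq)
   apply (simp add: pow_nz)
  by (metis pow0 pow_add add.right_inverse)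

lemma inv_antitone: "a \<noteq> tzero S \<Longrightarrow> tle S a b \<Longrightarrow> tle S (tinv S b) (tinv S a)"
proof -
  assume a: "a \<noteq> tzero S" and ab: "tle S a b"
  have b: "b \<noteq> tzero S" using ab a zero_le le_antisym by blast
  have "tle S (tmul S (tmul S (tinv S a) (tinv S b)) a) (tmul S (tmul S (tinv S a) (tinv S b)) b)"
    by (rule mul_mono[OF ab])
  moreover have "tmul S (tmul S (tinv S a) (tinv S b)) a = tinv S b"
  proof -
    have "tmul S (tmul S (tinv S a) (tinv S b)) a = tmul S (tmul S a (tinv S a)) (tinv S b)"
      by (simp only: mul_comm[of "tmul S (tinv S a) (tinv S b)" a] mul_assoc)
    also have "\<dots> = tmul S (tinv S b) (tone S)" by (simp only: mul_inv[OF a] mul_comm)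
    finally show ?thesis by (simp only: mul_one)
  qed
  moreover have "tmul S (tmul S (tinv S a) (tinv S b)) b = tinv S a"
  proof -
    have "tmul S (tmul S (tinv S a) (tinv S b)) b = tmul S (tinv S a) (tmul S b (tinv S b))"
      by (simp only: mul_comm[of _ b] mul_assoc)
    also have "\<dots> = tinv S a" by (simp only: mul_inv[OF b] mul_one)
    finally show ?thesis .
  qed
  ultimately show ?thesis by simp
qed

lemma foldr_le_iff:
  "tle S (foldr (\<lambda>i acc. tadd S (f i) acc) xs (tzero S)) b \<longleftrightarrow> (\<forall>i\<in>set xs. tle S (f i) b)"
  by (induction xs) (auto simp: zero_le add_le_iff)

lemma foldr_attain:
  "xs \<noteq> [] \<Longrightarrow> \<exists>i\<in>set xs. foldr (\<lambda>i acc. tadd S (f i) acc) xs (tzero S) = f i"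
proof (induction xs)
  case Nil then show ?case by simp
next
  case (Cons a xs)
  show ?case
  proof (cases "xs = []")
    case True then show ?thesis by (simp add: add_zero)
  next
    case False
    then obtain i where i: "i \<in> set xs" "foldr (\<lambda>i acc. tadd S (f i) acc) xs (tzero S) = f i"
      using Cons by blast
    then show ?thesis using add_sel[of "f a" "f i"] by auto
  qed
qed

lemma tsum_le_iff: "finite I \<Longrightarrow> tle S (tsum S f I) b \<longleftrightarrow> (\<forall>i\<in>I. tle S (f i) b)"
  unfolding tsum_def by (simp add: foldr_le_iff)

lemma tsum_ge: "finite I \<Longrightarrow> i \<in> I \<Longrightarrow> tle S (f i) (tsum S f I)"
  using tsum_le_iff le_refl by blast

lemma tsum_attain: "finite I \<Longrightarrow> I \<noteq> {} \<Longrightarrow> \<exists>i\<in>I. tsum S f I = f i"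
  unfolding tsum_def using foldr_attain[of "sorted_list_of_set I" f] by auto

lemma foldr_cong2: "(\<forall>i\<in>set xs. f i = g i) \<Longrightarrow>
  foldr (\<lambda>i acc. tadd S (f i) acc) xs z = foldr (\<lambda>i acc. tadd S (g i) acc) xs z"
  by (induction xs) auto

lemma tsum_cong: "finite I \<Longrightarrow> (\<And>i. i \<in> I \<Longrightarrow> f i = g i) \<Longrightarrow> tsum S f I = tsum S g I"
  unfolding tsum_def by (rule foldr_cong2) simp

lemma tsum_nz: "finite I \<Longrightarrow> i \<in> I \<Longrightarrow> f i \<noteq> tzero S \<Longrightarrow> tsum S f I \<noteq> tzero S"
proof
  assume "finite I" "i \<in> I" "f i \<noteq> tzero S" "tsum S f I = tzero S"
  then have "tle S (f i) (tzero S)" using tsum_ge by metis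
  then show False using zero_le[of "f i"] le_antisym \<open>f i \<noteq> tzero S\<close> by blast
qed

lemma tmin_ge_iff: "tle S b (tmin S u v) \<longleftrightarrow> tle S b u \<and> tle S b v"
proof (cases "tle S u v")
  case True then show ?thesis unfolding tmin_def using le_trans[of b u v] by auto
next
  case False then have "tle S v u" using le_total by blast
  then show ?thesis unfolding tmin_def using le_trans[of b v u] False by auto
qed

lemma foldr_min_ge:
  "tle S b (foldr (\<lambda>j acc. tmin S (f j) acc) xs a) \<longleftrightarrow> tle S b a \<and> (\<forall>j\<in>set xs. tle S b (f j))"
proof (induction xs)
  case Nil then show ?case by simp
next
  case (Cons c xs)
  let ?r = "foldr (\<lambda>j acc. tmin S (f j) acc) xs a"
  have "tle S b (tmin S (f c) ?r) \<longleftrightarrow> tle S b (f c) \<and> tle S b ?r"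
    by (rule tmin_ge_iff)
  then show ?case using Cons by auto
qed

lemma foldr_min_attain:
  "foldr (\<lambda>j acc. tmin S (f j) acc) xs a = a \<or> (\<exists>j\<in>set xs. foldr (\<lambda>j acc. tmin S (f j) acc) xs a = f j)"
  by (induction xs) (auto simp: tmin_def)

lemma tmin_range_le: "j \<in> {1..N} \<Longrightarrow> tle S (tmin_range S f N) (f j)"
  using foldr_min_ge[of "tmin_range S f N" f "[2..<N+1]" "f 1"] le_refl[of "tmin_range S f N"]
  unfolding tmin_range_def by (cases "j = 1") auto

lemma tmin_range_attain: "N \<ge> 1 \<Longrightarrow> \<exists>j\<in>{1..N}. tmin_range S f N = f j"
  unfolding tmin_range_def using foldr_min_attain[of f "[2..<N+1]" "f 1"] by force

end

theorem mainTheorem1: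
  fixes S :: "'a tsf" and M N :: nat and x y :: "nat \<Rightarrow> 'a" and p :: "nat \<Rightarrow> real"
  assumes "trop_semifield S"
    and "M \<ge> 1" and "N \<ge> 1"
    and "\<forall>i\<in>{1..M}. x i \<noteq> tzero S"
    and "\<forall>i\<in>{1..M}. y i \<noteq> tzero S"
  shows "Delta S M N x y p = tsum S (\<lambda>i. tmin_range S (\<lambda>j. phi_i S M x y i (p j)) N) {1..M}
       \<and> is_tmin_of S (Delta S M N x y p)
           {part_val S M N x y p P | P. is_ordered_partition M N P}"
proof -
  interpret tsl S by (unfold_locales) (rule assms(1))
  have xnz: "\<And>i. i \<in> {1..M} \<Longrightarrow> x i \<noteq> tzero S" using assms(4) by blast
  have ynz: "\<And>i. i \<in> {1..M} \<Longrightarrow> y i \<noteq> tzero S" using assms(5) by blast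
  have M1: "1 \<in> {1..M}" using assms(2) by simp
  have N1: "1 \<in> {1..N}" using assms(3) by simp
  let ?phi = "\<lambda>q. phi S M x y q"
  have phinz: "?phi q \<noteq> tzero S" for q
    unfolding phi_def
    apply (rule tsum_nz[OF _ M1])
     apply simp
    apply (rule mul_nz)
     apply (rule tinv_nz, rule ynz, rule M1)
    apply (rule pow_nz, rule xnz, rule M1)
    done
  have mm: "tmat_mul S K A B i j = tsum S (\<lambda>k. tmul S (A i k) (B k j)) {1..K}"
    for K A B i j by (simp add: tmat_mul_def)
  define C where "C = tmat_mul S M (tconj S (colvec y)) (Xmat S x p)"
  have C: "C 1 j = ?phi (p j)" for j
    unfolding C_def mm phi_def
    by (rule tsum_cong) (simp_all add: tconj_def colvec_def Xmat_def ynz)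
  have B: "tconj S C j 1 = tinv S (?phi (p j))" for j
    unfolding tconj_def C by (simp add: phinz)
  define g where "g k j = tmul S (tpow S (x k) (p j)) (tinv S (?phi (p j)))" for k j
  define d where "d k = tsum S (g k) {1..N}" for k
  define A where "A = tmat_mul S N (Xmat S x p) (tconj S C)"
  have A: "A k 1 = d k" for k
    unfolding A_def mm d_def g_def B by (simp add: Xmat_def)
  have gnz: "k \<in> {1..M} \<Longrightarrow> g k j \<noteq> tzero S" for k j
    unfolding g_def by (simp add: mul_nz tinv_nz pow_nz xnz phinz)
  have dnz: "k \<in> {1..M} \<Longrightarrow> d k \<noteq> tzero S" for k
    unfolding d_def by (rule tsum_nz[OF _ N1]) (simp_all add: gnz)
  have D: "Delta S M N x y p = tsum S (\<lambda>k. tmul S (tinv S (d k)) (y k)) {1..M}"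
  proof -
    have "Delta S M N x y p = tmat_mul S M (tconj S A) (colvec y) 1 1"
      unfolding Delta_def A_def C_def ..
    also have "\<dots> = tsum S (\<lambda>k. tmul S (tinv S (d k)) (y k)) {1..M}"
      unfolding mm tconj_def colvec_def A by (rule tsum_cong) (simp_all add: dnz)
    finally show ?thesis .
  qed
  let ?t = "\<lambda>k j. phi_i S M x y k (p j)"
  have tg: "k \<in> {1..M} \<Longrightarrow> ?t k j = tmul S (y k) (tinv S (g k j))" for k j
  proof -
    assume k: "k \<in> {1..M}"
    have "tinv S (g k j) = tmul S (tpow S (x k) (- p j)) (?phi (p j))"
    proof (rule tinv_eq[OF gnz[OF k]])
      have "tmul S (g k j) (tmul S (tpow S (x k) (- p j)) (?phi (p j)))
          = tmul S (tmul S (tpow S (x k) (p j)) (tpow S (x k) (- p j)))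
                   (tmul S (tinv S (?phi (p j))) (?phi (p j)))"
        unfolding g_def by (rule mul_swap)
      also have "\<dots> = tone S"
      proof -
        have "tmul S (tpow S (x k) (p j)) (tpow S (x k) (- p j)) = tone S"
          using mul_inv[OF pow_nz[OF xnz[OF k]], of "p j"] inv_pow[OF xnz[OF k], of "p j"] by simp
        moreover have "tmul S (tinv S (?phi (p j))) (?phi (p j)) = tone S"
          using mul_inv[OF phinz[of "p j"]] mul_comm by metis
        ultimately show ?thesis by (simp add: mul_one)
      qed
      finally show "tmul S (g k j) (tmul S (tpow S (x k) (- p j)) (?phi (p j))) = tone S" .
    qed
    then show ?thesis unfolding phi_i_def by (simp add: mul_assoc)
  qed
  define m where "m k = tmin_range S (?t k) N" for k
  have mk: "k \<in> {1..M} \<Longrightarrow> tmul S (tinv S (d k)) (y k) = m k" for k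
  proof -
    assume k: "k \<in> {1..M}"
    obtain j0 where j0: "j0 \<in> {1..N}" "d k = g k j0"
      using tsum_attain[of "{1..N}" "g k"] N1 unfolding d_def by auto
    obtain j1 where j1: "j1 \<in> {1..N}" "m k = ?t k j1"
      using tmin_range_attain[OF assms(3), of "?t k"] unfolding m_def by auto
    have L: "tmul S (tinv S (d k)) (y k) = ?t k j0"
      using j0 tg[OF k] by (simp add: mul_comm)
    have "tle S (m k) (?t k j0)" unfolding m_def by (rule tmin_range_le[OF j0(1)])
    moreover have "tle S (?t k j0) (?t k j1)"
    proof -
      have "tle S (g k j1) (d k)" unfolding d_def by (rule tsum_ge[OF _ j1(1)]) simp
      then have "tle S (tinv S (g k j0)) (tinv S (g k j1))"
        using inv_antitone gnz[OF k] j0(2) by metis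
      then show ?thesis using tg[OF k] mul_mono by metis
    qed
    ultimately show ?thesis using L j1(2) le_antisym by metis
  qed
  have D2: "Delta S M N x y p = tsum S m {1..M}"
    unfolding D by (rule tsum_cong) (simp_all add: mk)
  have lower: "tle S (Delta S M N x y p) (part_val S M N x y p P)"
    if P: "is_ordered_partition M N P" for P
  proof -
    have "\<forall>i\<in>{1..M}. tle S (m i) (part_val S M N x y p P)"
    proof
      fix i assume i: "i \<in> {1..M}"
      then obtain j where j: "j \<in> {1..N}" "i \<in> P j"
        using P unfolding is_ordered_partition_def by blast
      have fin: "finite (P j)" using P j(1) unfolding is_ordered_partition_def
        by (meson finite_atLeastAtMost finite_subset)
      have s1: "tle S (m i) (?t i j)" unfolding m_def by (rule tmin_range_le[OF j(1)])
      have s2: "tle S (?t i j) (tsum S (\<lambda>i. ?t i j) (P j))"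
        by (rule tsum_ge[OF fin j(2)])
      have s3: "tle S (tsum S (\<lambda>i. ?t i j) (P j)) (part_val S M N x y p P)"
        unfolding part_val_def by (rule tsum_ge[OF _ j(1), where f = "\<lambda>j. tsum S (\<lambda>i. ?t i j) (P j)"]) simp
      show "tle S (m i) (part_val S M N x y p P)" using s1 s2 s3 le_trans by metis
    qed
    then show ?thesis unfolding D2 by (simp add: tsum_le_iff)
  qed
  have "\<forall>i\<in>{1..M}. \<exists>j\<in>{1..N}. m i = ?t i j"
    using tmin_range_attain[OF assms(3)] unfolding m_def by blast
  then obtain J where J: "\<And>i. i \<in> {1..M} \<Longrightarrow> J i \<in> {1..N} \<and> m i = ?t i (J i)"
    by metis
  define P where "P j = {i \<in> {1..M}. J i = j}" for j
  have Ppart: "is_ordered_partition M N P"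
    unfolding is_ordered_partition_def P_def using J by auto
  have "tle S (part_val S M N x y p P) (Delta S M N x y p)"
    unfolding part_val_def
  proof (subst tsum_le_iff, simp, intro ballI)
    fix j assume j: "j \<in> {1..N}"
    have fin: "finite (P j)" unfolding P_def by simp
    show "tle S (tsum S (\<lambda>i. ?t i j) (P j)) (Delta S M N x y p)"
    proof (subst tsum_le_iff[OF fin], intro ballI)
      fix i assume i: "i \<in> P j"
      then have i1: "i \<in> {1..M}" and ij: "J i = j" unfolding P_def by auto
      have "?t i j = m i" using J[OF i1] ij by simp
      moreover have "tle S (m i) (Delta S M N x y p)" unfolding D2 by (rule tsum_ge[OF _ i1]) simp
      ultimately show "tle S (?t i j) (Delta S M N x y p)" by simp
    qed
  qed
  then have pv: "part_val S M N x y p P = Delta S M N x y p"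
    using lower[OF Ppart] le_antisym by blast
  have "\<exists>Q. Delta S M N x y p = part_val S M N x y p Q \<and> is_ordered_partition M N Q"
    apply (rule exI[of _ P]) using pv Ppart by simp
  then have mem: "Delta S M N x y p \<in> {part_val S M N x y p P | P. is_ordered_partition M N P}"
    by simp
  have all: "\<forall>a\<in>{part_val S M N x y p P | P. is_ordered_partition M N P}. tle S (Delta S M N x y p) a"
  proof
    fix a assume "a \<in> {part_val S M N x y p P | P. is_ordered_partition M N P}"
    then obtain Q where "a = part_val S M N x y p Q" "is_ordered_partition M N Q" by blast
    then show "tle S (Delta S M N x y p) a" using lower by simp
  qed
  have eq: "Delta S M N x y p = tsum S (\<lambda>i. tmin_range S (\<lambda>j. phi_i S M x y i (p j)) N) {1..M}"
    using D2 unfolding m_def .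
  show ?thesis
    unfolding is_tmin_of_def using eq mem all by blast
qed

end
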